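(* Let $G$ be an additive group, let $X$ be a complete non-Archimedean normed space over a field $K$ with a non-trivial non-Archimedean valuation $|\cdot|$, and let $k$ be a fixed integer with $k\neq 0,\pm1$. For $f:G\to X$ put $$Df(x,y)=f(x+ky)+f(x-ky)-k^2f(x+y)-k^2f(x-y)-2(1-k^2)f(x).$$ Let $\varphi:G\times G\to[0,\infty)$, and for $u\in G$ write $$\Phi(u)=\max\{|2(k^2-1)|\varphi(u,u),\ |k^2|\varphi(2u,u),\ \varphi(u,2u),\ \varphi((k+1)u,u),\ \varphi((k-1)u,u),\ \varphi(u,u),\ |k^2|\varphi(2u,2u),\ |2(k^2-1)|\varphi(u,2u),\ \varphi(u,3u),\ \varphi((2k+1)u,u),\ \varphi((2k-1)u,u)\}.$$ Suppose that $$\lim_{n\to\infty}\frac{1}{|8^n|}\max\{\varphi(2^{n+1}x,2^{n+1}y),\ |2|\varphi(2^nx,2^ny)\}=0,\qquad \lim_{n\to\infty}\frac{1}{|8^nk^2(k^2-1)|}\Phi(2^{n-1}x)=0$$ for all $x,y\in G$, and that for each $x\in G$ the limit $$\tilde{\varphi}_C(x):=\lim_{n\to\infty}\max\Big\{\frac{1}{|8^i|}\Phi(2^{i-1}x):\ 0\le i<n\Big\}$$ exists. Suppose that $f:G\to X$ is an odd function satisfying $\|Df(x,y)\|\le\varphi(x,y)$ for all $x,y\in G$. Then there exists a cubic function $C:G\to X$ such that $$\|f(2x)-2f(x)-C(x)\|\le\frac{1}{|8k^2(k^2-1)|}\tilde{\varphi}_C(x)\qquad(x\in G).$$ Moreover,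 if $$\lim_{i\to\infty}\lim_{n\to\infty}\max\Big\{\frac{1}{|8^j|}\Phi(2^{j-1}x):\ i\le j<n+i\Big\}=0,$$ then $C$ is the unique cubic function satisfying this inequality.
   Context: A non-Archimedean norm satisfies $\|x\|=0\iff x=0$, $\|rx\|=|r|\|x\|$ and $\|x+y\|\le\max\{\|x\|,\|y\|\}$. In the proof, $h(x)=f(2x)-2f(x)$ and $C(x)=\lim_{n\to\infty}h(2^nx)/8^n$. *)

theory Defs
  imports Complex_Main
begin

fun nsmul :: "nat \<Rightarrow> 'a::monoid_add \<Rightarrow> 'a" where
  "nsmul 0 x = 0"
| "nsmul (Suc n) x = x + nsmul n x"

definition zsmul :: "int \<Rightarrow> 'a::group_add \<Rightarrow> 'a" where
  "zsmul m x = (if 0 \<le> m then nsmul (nat m) x else - nsmul (nat (- m)) x)"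

definition nonarch_valuation :: "('k::field \<Rightarrow> real) \<Rightarrow> bool" where
  "nonarch_valuation v \<longleftrightarrow>
     (\<forall>r. 0 \<le> v r) \<and> (\<forall>r. v r = 0 \<longleftrightarrow> r = 0) \<and>
     (\<forall>r s. v (r * s) = v r * v s) \<and> (\<forall>r s. v (r + s) \<le> max (v r) (v s))"

definition nontrivial_valuation :: "('k::field \<Rightarrow> real) \<Rightarrow> bool" where
  "nontrivial_valuation v \<longleftrightarrow> (\<exists>r. v r \<noteq> 0 \<and> v r \<noteq> 1)"

definition nonarch_normed_space ::
  "('k::field \<Rightarrow> real) \<Rightarrow> ('k \<Rightarrow> 'x::ab_group_add \<Rightarrow> 'x) \<Rightarrow> ('x \<Rightarrow> real) \<Rightarrow> bool" where
  "nonarch_normed_space v sc nrm \<longleftrightarrow>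
     Vector_Spaces.vector_space sc \<and>
     (\<forall>x. 0 \<le> nrm x) \<and> (\<forall>x. nrm x = 0 \<longleftrightarrow> x = 0) \<and>
     (\<forall>r x. nrm (sc r x) = v r * nrm x) \<and>
     (\<forall>x y. nrm (x + y) \<le> max (nrm x) (nrm y))"

definition norm_complete :: "('x::ab_group_add \<Rightarrow> real) \<Rightarrow> bool" where
  "norm_complete nrm \<longleftrightarrow>
     (\<forall>s::nat \<Rightarrow> 'x. (\<forall>e>0. \<exists>N. \<forall>m\<ge>N. \<forall>n\<ge>N. nrm (s m - s n) < e)
        \<longrightarrow> (\<exists>l. (\<lambda>n. nrm (s n - l)) \<longlonglongrightarrow> 0))"

definition cubic :: "('a::ab_group_add \<Rightarrow> 'x::ab_group_add) \<Rightarrow> bool" where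
  "cubic C \<longleftrightarrow> (\<forall>x y. C (nsmul 2 x + y) + C (nsmul 2 x - y) =
      nsmul 2 (C (x + y)) + nsmul 2 (C (x - y)) + nsmul 12 (C x))"

definition Dop ::
  "('k::field \<Rightarrow> 'x::ab_group_add \<Rightarrow> 'x) \<Rightarrow> int \<Rightarrow> ('a::ab_group_add \<Rightarrow> 'x) \<Rightarrow> 'a \<Rightarrow> 'a \<Rightarrow> 'x" where
  "Dop sc k f x y =
     f (x + zsmul k y) + f (x - zsmul k y)
     - sc (of_int (k^2)) (f (x + y)) - sc (of_int (k^2)) (f (x - y))
     - sc (of_int (2 * (1 - k^2))) (f x)"

definition Phi ::
  "('k::field \<Rightarrow> real) \<Rightarrow> int \<Rightarrow> ('a::ab_group_add \<Rightarrow> 'a \<Rightarrow> real) \<Rightarrow> 'a \<Rightarrow> real" where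
  "Phi v k \<phi> u = Max {
      v (of_int (2 * (k^2 - 1))) * \<phi> u u,
      v (of_int (k^2)) * \<phi> (nsmul 2 u) u,
      \<phi> u (nsmul 2 u),
      \<phi> (zsmul (k + 1) u) u,
      \<phi> (zsmul (k - 1) u) u,
      \<phi> u u,
      v (of_int (k^2)) * \<phi> (nsmul 2 u) (nsmul 2 u),
      v (of_int (2 * (k^2 - 1))) * \<phi> u (nsmul 2 u),
      \<phi> u (nsmul 3 u),
      \<phi> (zsmul (2 * k + 1) u) u,
      \<phi> (zsmul (2 * k - 1) u) u}"

end

theory Submission
  imports Defs
begin

fun padd :: "int list \<Rightarrow> int list \<Rightarrow> int list" where
  "padd [] q = q" | "padd p [] = p" | "padd (a#p) (b#q) = (a+b) # padd p q"
fun pmul :: "int list \<Rightarrow> int list \<Rightarrow> int list" where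
  "pmul [] q = []" | "pmul (a#p) q = padd (map ((*) a) q) (0 # pmul p q)"
fun peval :: "int list \<Rightarrow> int \<Rightarrow> int" where
  "peval [] k = 0" | "peval (a#p) k = a + k * peval p k"
fun pnorm :: "int list \<Rightarrow> int list" where
  "pnorm [] = []" | "pnorm (a#p) = (if a = 0 \<and> pnorm p = [] then [] else a # pnorm p)"

lemma peval_padd[simp]: "peval (padd p q) k = peval p k + peval q k"
  by (induction p q rule: padd.induct) (auto simp: algebra_simps)
lemma peval_map_mult[simp]: "peval (map ((*) a) q) k = a * peval q k"
  by (induction q) (auto simp: algebra_simps)
lemma peval_pmul[simp]: "peval (pmul p q) k = peval p k * peval q k"
  by (induction p) (auto simp: algebra_simps)
lemma peval_pnorm[simp]: "peval (pnorm p) k = peval p k"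
proof (induction p)
  case (Cons a p) then show ?case by (cases "a = 0 \<and> pnorm p = []") (auto simp del: peval.simps simp: peval.simps(2), metis peval.simps(1))
qed simp

datatype rel = RD int int int int int int | RO int int int int | RH int int int int

type_synonym pt = "int \<times> int \<times> int \<times> int"

fun relf :: "rel \<Rightarrow> (int list \<times> pt) list" where
  "relf (RD a0 a1 b0 b1 c d) =
     [([1],(a0,a1+c,b0,b1+d)), ([1],(a0,a1-c,b0,b1-d)), ([0,0,-1],(a0+c,a1,b0+d,b1)),
      ([0,0,-1],(a0-c,a1,b0-d,b1)), ([-2,0,2],(a0,a1,b0,b1))]"
| "relf (RO a0 a1 b0 b1) = [([1],(a0,a1,b0,b1)), ([1],(-a0,-a1,-b0,-b1))]"
| "relf (RH a0 a1 b0 b1) = [([1],(2*a0,2*a1,2*b0,2*b1)), ([-8],(a0,a1,b0,b1))]"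

definition pscale :: "int list \<Rightarrow> (int list \<times> 'p) list \<Rightarrow> (int list \<times> 'p) list" where
  "pscale c l = map (\<lambda>(p,j). (pmul c p, j)) l"

definition combo :: "(int list \<times> rel) list \<Rightarrow> (int list \<times> pt) list" where
  "combo L = concat (map (\<lambda>(c,r). pscale c (relf r)) L)"

definition coefp :: "(int list \<times> 'p) list \<Rightarrow> 'p \<Rightarrow> int list" where
  "coefp l j = foldr padd (map fst (filter (\<lambda>e. snd e = j) l)) []"

definition samecoef :: "(int list \<times> 'p) list \<Rightarrow> (int list \<times> 'p) list \<Rightarrow> bool" where
  "samecoef l1 l2 = list_all (\<lambda>j. pnorm (coefp l1 j) = pnorm (coefp l2 j)) (remdups (map snd l1 @ map snd l2))"


definition pkey :: "pt \<Rightarrow> int" where "pkey = (\<lambda>(a,b,c,d). ((a*64+b)*64+c)*64+d)"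
fun mergec :: "(int list \<times> pt) list \<Rightarrow> (int list \<times> pt) list \<Rightarrow> (int list \<times> pt) list" where
  "mergec [] ys = ys"
| "mergec xs [] = xs"
| "mergec ((p,i)#xs) ((q,j)#ys) = (if pkey i < pkey j then (p,i) # mergec xs ((q,j)#ys)
     else if pkey j < pkey i then (q,j) # mergec ((p,i)#xs) ys
     else if i = j then (padd p q, i) # mergec xs ys else (p,i) # (q,j) # mergec xs ys)"
fun pairup :: "(int list \<times> pt) list list \<Rightarrow> (int list \<times> pt) list list" where
  "pairup (a#b#r) = mergec a b # pairup r" | "pairup l = l"
lemma length_pairup: "length (pairup l) \<le> length l" by (induction l rule: pairup.induct) auto
function mergeall :: "(int list \<times> pt) list list \<Rightarrow> (int list \<times> pt) list" where
  "mergeall [] = []" | "mergeall [a] = a" | "mergeall (a#b#r) = mergeall (pairup (a#b#r))"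
  by pat_completeness auto
termination by (relation "measure length") (auto simp: le_imp_less_Suc length_pairup)
definition nf :: "(int list \<times> pt) list \<Rightarrow> (int list \<times> pt) list" where
 "nf l = filter (\<lambda>(p,j). p \<noteq> []) (map (\<lambda>(p,j). (pnorm p, j)) (mergeall (map (\<lambda>e. [e]) l)))"

definition lcp :: "('k::field \<Rightarrow> 'x::ab_group_add \<Rightarrow> 'x) \<Rightarrow> (pt \<Rightarrow> 'x) \<Rightarrow> int \<Rightarrow> (int list \<times> pt) list \<Rightarrow> 'x" where
  "lcp sc w k l = sum_list (map (\<lambda>(p,j). sc (of_int (peval p k)) (w j)) l)"

context vector_space
begin

lemma lcp_Nil[simp]: "lcp scale w k [] = 0" by (simp add: lcp_def)
lemma lcp_Cons[simp]: "lcp scale w k ((p,j)#l) = scale (of_int (peval p k)) (w j) + lcp scale w k l"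
  by (simp add: lcp_def)
lemma lcp_append[simp]: "lcp scale w k (l1 @ l2) = lcp scale w k l1 + lcp scale w k l2"
  by (simp add: lcp_def)

lemma lcp_mergec: "lcp scale w k (mergec xs ys) = lcp scale w k xs + lcp scale w k ys"
  by (induction xs ys rule: mergec.induct) (auto simp: algebra_simps)

lemma lcp_pairup: "sum_list (map (lcp scale w k) (pairup ls)) = sum_list (map (lcp scale w k) ls)"
  by (induction ls rule: pairup.induct) (auto simp: lcp_mergec algebra_simps)

lemma lcp_mergeall: "lcp scale w k (mergeall ls) = sum_list (map (lcp scale w k) ls)"
proof (induction ls rule: mergeall.induct)
  case (3 a b r)
  then show ?case by (simp only: mergeall.simps lcp_pairup)
qed simp_all

lemma lcp_filter: "lcp scale w k (filter (\<lambda>(p,j). p \<noteq> []) l) = lcp scale w k l"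
  by (induction l) auto

lemma lcp_pnorm: "lcp scale w k (map (\<lambda>(p,j). (pnorm p, j)) l) = lcp scale w k l"
  by (induction l) auto

lemma lcp_singles: "sum_list (map (lcp scale w k) (map (\<lambda>e. [e]) l)) = lcp scale w k l"
  by (induction l) auto

lemma lcp_nf: "lcp scale w k (nf l) = lcp scale w k l"
  unfolding nf_def lcp_filter lcp_pnorm lcp_mergeall lcp_singles ..

lemma lcp_pscale: "lcp scale w k (pscale c l) = scale (of_int (peval c k)) (lcp scale w k l)"
  by (induction l) (auto simp: pscale_def scale_right_distrib)

lemma lcp_combo: "lcp scale w k (combo L) = sum_list (map (\<lambda>(c,r). scale (of_int (peval c k)) (lcp scale w k (relf r))) L)"
  unfolding combo_def by (induction L) (auto simp: lcp_pscale lcp_def[symmetric])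

lemma lcp_combo_zero: "(\<And>r. lcp scale w k (relf r) = 0) \<Longrightarrow> lcp scale w k (combo L) = 0"
  unfolding lcp_combo by (induction L) auto

end

lemma nsmul_add: "nsmul (m + n) x = nsmul m x + nsmul n x"
  by (induction m) (auto simp: add.assoc)
lemma nsmul_plus: "nsmul n (x + y) = nsmul n x + nsmul n (y::'a::ab_group_add)"
  by (induction n) (auto simp: algebra_simps)
lemma nsmul_minus: "nsmul n (- x) = - nsmul n (x::'a::ab_group_add)"
  by (induction n) (auto simp: algebra_simps)
lemma nsmul_mult: "nsmul (m * n) x = nsmul m (nsmul n (x::'a::ab_group_add))"
  by (induction m) (auto simp: nsmul_add)
lemma nsmul_zero[simp]: "nsmul n (0::'a::monoid_add) = 0"
  by (induction n) auto
lemma nsmul_one[simp]: "nsmul 1 x = x" by simp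

lemma zsmul_int[simp]: "zsmul (int n) x = nsmul n x" by (simp add: zsmul_def)
lemma zsmul_0[simp]: "zsmul 0 (x::'a::group_add) = 0" unfolding zsmul_def by simp

lemma zsmul_neg_int: "zsmul (- int n) x = - nsmul n (x::'a::ab_group_add)"
  unfolding zsmul_def by (cases "n = 0") (simp_all del: nsmul.simps add: nsmul.simps(1))
lemma zsmul_neg: "zsmul (- a) x = - zsmul a (x::'a::ab_group_add)"
proof (cases a rule: int_cases)
  case (nonneg n) then show ?thesis by (simp only: zsmul_neg_int zsmul_int)
next
  case (neg n)
  then have "- a = int (Suc n)" by simp
  then show ?thesis unfolding neg using zsmul_neg_int[of "Suc n" x] zsmul_int[of "Suc n" x]
    by (metis minus_minus)
qed

lemma zsmul_plus: "zsmul a (x + y) = zsmul a x + zsmul a (y::'a::ab_group_add)"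
  by (auto simp: zsmul_def nsmul_plus)
lemma zsmul_minus_arg: "zsmul a (- x) = - zsmul a (x::'a::ab_group_add)"
  by (auto simp: zsmul_def nsmul_minus)

lemma zsmul_add_int: "zsmul (a + int n) x = zsmul a x + nsmul n (x::'a::ab_group_add)"
proof (cases a rule: int_cases)
  case (nonneg m) then show ?thesis
    by (metis nsmul_add of_nat_add zsmul_int)
next
  case (neg m)
  have za: "zsmul a x = - nsmul (Suc m) x" using neg zsmul_neg_int[of "Suc m" x] by simp
  show ?thesis
  proof (cases "n \<le> Suc m")
    case True
    then have e: "a + int n = - int (Suc m - n)" using neg by simp
    have "nsmul (Suc m) x = nsmul (Suc m - n) x + nsmul n x"
      using True by (metis le_add_diff_inverse2 nsmul_add)
    then show ?thesis unfolding e za zsmul_neg_int by (simp add: algebra_simps)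
  next
    case False
    then have e: "a + int n = int (n - Suc m)" using neg by simp
    have "nsmul n x = nsmul (n - Suc m) x + nsmul (Suc m) x"
      using False by (metis le_add_diff_inverse2 nat_le_linear nsmul_add)
    then show ?thesis unfolding e za zsmul_int by (simp add: algebra_simps)
  qed
qed

lemma zsmul_add: "zsmul (a + b) x = zsmul a x + zsmul b (x::'a::ab_group_add)"
proof (cases b rule: int_cases)
  case (nonneg n) then show ?thesis by (simp add: zsmul_add_int)
next
  case (neg n)
  have h: "zsmul (a + b + int (Suc n)) x = zsmul (a + b) x + nsmul (Suc n) x"
    by (rule zsmul_add_int)
  have e: "a + b + int (Suc n) = a" using neg by simp
  have zb: "zsmul b x = - nsmul (Suc n) x" unfolding neg by (rule zsmul_neg_int)
  show ?thesis unfolding zb using h[unfolded e] by (simp del: nsmul.simps)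
qed

lemma zsmul_diff: "zsmul (a - b) x = zsmul a x - zsmul b (x::'a::ab_group_add)"
  using zsmul_add[of a "-b" x] by (simp add: zsmul_neg)

lemma zsmul_mult: "zsmul (a * b) x = zsmul a (zsmul b (x::'a::ab_group_add))"
proof -
  have pos: "zsmul (int n * b) x = nsmul n (zsmul b x)" for n
    by (induction n) (auto simp: algebra_simps zsmul_add)
  show ?thesis
  proof (cases a rule: int_cases)
    case (nonneg n) then show ?thesis using pos by simp
  next
    case (neg n)
    then have "a * b = - (int (Suc n) * b)" by (simp only: minus_mult_left)
    then show ?thesis using neg pos[of "Suc n"]
      by (simp only: zsmul_neg zsmul_int) 
  qed
qed

lemma zsmul_1[simp]: "zsmul 1 x = x" by (simp add: zsmul_def)
lemma zsmul_zero[simp]: "zsmul a (0::'a::ab_group_add) = 0" by (simp add: zsmul_def)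

lemma zsmul_numeral[simp]: "zsmul (numeral n) x = nsmul (numeral n) x"
  using zsmul_int[of "numeral n" x] by simp

definition cubL :: "(int list \<times> rel) list" where
  "cubL = [([0,0,(-4)], RD (-2) (-1) (-1) 0 1 2),
    ([0,0,4], RD (-2) (-1) (-2) 0 1 1),
    ([0,0,4], RD (-2) (-1) (-1) (-1) 1 1),
    ([0,0,(-4)], RD (-2) (-1) (-2) (-1) 1 0),
    ([(-2)], RD (-2) (-1) (-1) (-1) 0 1),
    ([0,0,(-3)], RD (-2) (-1) (-1) 0 1 0),
    ([0,0,3], RD (-2) (-1) (-1) (-1) 1 (-1)),
    ([(-2),0,3], RD (-2) (-1) (-1) 0 1 1),
    ([2,0,(-4)], RD (-2) (-1) (-2) 0 1 0),
    ([1,0,(-3)], RD (-2) (-1) (-1) (-1) 1 0),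
    ([(-1),0,4], RD (-2) (-1) (-2) (-1) 1 (-1)),
    ([2,0,(-7)], RD (-2) 0 (-1) (-1) 0 1),
    ([(-2)], RD (-2) (-1) (-1) 1 0 1),
    ([2], RD (-2) (-1) (-1) 0 0 2),
    ([(-2)], RD (-2) (-1) (-2) 0 0 1),
    ([1], RD (-2) (-1) (-1) 1 1 0),
    ([(-2),0,4], RD (-2) (-1) (-1) 0 1 (-1)),
    ([1], RD (-2) (-1) (-1) 1 1 2),
    ([(-1)], RD (-2) (-1) (-2) 1 1 1),
    ([4,0,(-8)], RD (-2) 0 (-1) 0 0 1),
    ([(-2),0,4], RD (-2) 0 (-1) 0 0 2),
    ([2,0,(-4)], RD (-2) 0 (-2) 0 0 1),
    ([2], RD (-2) 0 (-1) 1 0 1),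
    ([(-1)], RD (-2) 0 (-1) 1 0 2),
    ([1], RD (-2) 0 (-2) 1 0 1),
    ([0,0,(-1)], RD (-2) (-1) 0 (-1) 1 1),
    ([(-1),0,3], RD (-2) (-1) 0 (-1) 1 (-1)),
    ([1,0,(-4)], RD (-2) (-1) (-1) (-1) 1 (-2)),
    ([(-1),0,4], RD (-2) 0 (-1) (-1) 0 2),
    ([1,0,(-4)], RD (-2) 0 (-2) (-1) 0 1),
    ([0,0,3], RD (-2) (-1) 0 0 1 1),
    ([0,0,(-3)], RD (-2) (-1) 0 (-1) 1 0),
    ([2,0,(-3)], RD (-2) (-1) 0 0 1 0),
    ([(-1)], RD (-2) (-1) 0 1 1 1),
    ([(-2)], RD (-2) (-1) 0 0 0 1),
    ([0,0,(-2)], RD (-2) 0 0 (-1) 0 1),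
    ([1,0,(-1)], RD (-2) 0 0 0 0 2),
    ([0,0,1], RD (-2) (-1) 0 0 1 2),
    ([0,0,(-1)], RD (-2) (-1) 1 0 1 1),
    ([0,0,1], RD (-2) (-1) 1 (-1) 1 0),
    ([0,0,1], RD (-2) 0 1 (-1) 0 1),
    ([0,0,1], RD (-2) (-1) 1 0 1 0),
    ([0,0,(-1)], RD (-2) (-1) 0 0 1 (-1)),
    ([0,0,(-1)], RD (-2) (-1) 1 (-1) 1 (-1)),
    ([0,0,1], RD (-2) (-1) 0 (-1) 1 (-2)),
    ([0,0,(-1)], RD (-2) 0 0 (-1) 0 2),
    ([0,0,1,0,(-1)], RH (-1) 0 (-1) 0),
    ([0,0,(-4),0,4], RO (-2) 0 (-1) 0),
    ([0,0,6,0,(-6)], RH (-1) 0 0 0),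
    ([0,0,(-4),0,4], RO (-2) 0 1 0),
    ([0,0,1,0,(-1)], RH (-1) 0 1 0),
    ([0,0,8,0,(-8)], RO (-1) 0 (-1) 0),
    ([0,0,48,0,(-48)], RO (-1) 0 0 0),
    ([0,0,8,0,(-8)], RO (-1) 0 1 0)]"

definition cubB :: "(int list \<times> pt) list" where
  "cubB = [([1],(2,0,1,0)), ([1],(2,0,-1,0)), ([-2],(1,0,1,0)), ([-2],(1,0,-1,0)), ([-12],(1,0,0,0))]"
definition cubT :: "(int list \<times> pt) list" where
  "cubT = pscale [0,0,-4,0,4] cubB"

lemma cub_check: "nf (combo cubL) = nf cubT"
  by code_simp

lemma pt_add: "(zsmul a x + zsmul b y) + (zsmul c x + zsmul d y) = zsmul (a+c) x + zsmul (b+d) (y::'a::ab_group_add)"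
  by (simp add: zsmul_add algebra_simps)
lemma pt_diff: "(zsmul a x + zsmul b y) - (zsmul c x + zsmul d y) = zsmul (a-c) x + zsmul (b-d) (y::'a::ab_group_add)"
  by (simp add: zsmul_diff algebra_simps)
lemma pt_scale: "zsmul k (zsmul c x + zsmul d y) = zsmul (k*c) x + zsmul (k*d) (y::'a::ab_group_add)"
  by (simp add: zsmul_plus zsmul_mult)
lemma pt_neg: "- (zsmul c x + zsmul d y) = zsmul (-c) x + zsmul (-d) (y::'a::ab_group_add)"
  by (simp add: zsmul_neg)

lemma (in vector_space) nsmul_scale: "nsmul n v = scale (of_nat n) v"
  by (induction n) (auto simp: scale_left_distrib)


lemma lcp_RD:
  fixes sc :: "'k::field \<Rightarrow> 'x::ab_group_add \<Rightarrow> 'x" and C :: "'a::ab_group_add \<Rightarrow> 'x"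
  assumes vs: "vector_space sc"
  shows "lcp sc (\<lambda>(a0,a1,b0,b1). C (zsmul (a0+a1*k) x + zsmul (b0+b1*k) y)) k (relf (RD a0 a1 b0 b1 c d))
     = Dop sc k C (zsmul (a0+a1*k) x + zsmul (b0+b1*k) y) (zsmul c x + zsmul d y)"
proof -
  interpret vector_space sc by (rule vs)
  let ?P = "zsmul (a0+a1*k) x + zsmul (b0+b1*k) y" and ?Q = "zsmul c x + zsmul d y"
  have e1: "?P + zsmul k ?Q = zsmul (a0+(a1+c)*k) x + zsmul (b0+(b1+d)*k) y"
    unfolding pt_scale pt_add by (simp add: algebra_simps)
  have e2: "?P - zsmul k ?Q = zsmul (a0+(a1-c)*k) x + zsmul (b0+(b1-d)*k) y"
    unfolding pt_scale pt_diff by (simp add: algebra_simps)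
  have e3: "?P + ?Q = zsmul ((a0+c)+a1*k) x + zsmul ((b0+d)+b1*k) y"
    unfolding pt_add by (simp add: algebra_simps)
  have e4: "?P - ?Q = zsmul ((a0-c)+a1*k) x + zsmul ((b0-d)+b1*k) y"
    unfolding pt_diff by (simp add: algebra_simps)
  show ?thesis unfolding Dop_def e1 e2 e3 e4
    by (simp add: algebra_simps power2_eq_square)
qed

lemma lcp_combo_zero':
  assumes "vector_space sc" "\<And>c r. (c,r) \<in> set L \<Longrightarrow> lcp sc w k (relf r) = 0"
  shows "lcp sc w k (combo L) = 0"
proof -
  interpret vector_space sc by fact
  show ?thesis using assms(2) unfolding lcp_combo
  proof (induction L)
    case (Cons a L)
    obtain c r where a: "a = (c,r)" by force
    have "lcp sc w k (relf r) = 0" using Cons.prems a by auto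
    moreover have "(\<Sum>(c, r)\<leftarrow>L. sc (of_int (peval c k)) (lcp sc w k (relf r))) = 0"
      using Cons by auto
    ultimately show ?case by (simp add: a)
  qed simp
qed

lemma cubic_alg:
  fixes sc :: "'k::field \<Rightarrow> 'x::ab_group_add \<Rightarrow> 'x" and C :: "'a::ab_group_add \<Rightarrow> 'x"
  assumes vs: "vector_space sc" and two: "(2::'k) \<noteq> 0"
    and kk: "(of_int (k^2 * (k^2 - 1)) :: 'k) \<noteq> 0"
    and odd: "\<And>x. C (- x) = - C x" and hom: "\<And>x. C (nsmul 2 x) = sc 8 (C x)"
    and D0: "\<And>x y. Dop sc k C x y = 0"
  shows "cubic C"
  unfolding cubic_def
proof (intro allI)
  interpret vector_space sc by (rule vs)
  fix x y :: 'a
  define w :: "pt \<Rightarrow> 'x" where "w = (\<lambda>(a0,a1,b0,b1). C (zsmul (a0+a1*k) x + zsmul (b0+b1*k) y))"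
  have rel0: "lcp sc w k (relf r) = 0" for r
  proof (cases r)
    case (RD a0 a1 b0 b1 c d)
    let ?P = "zsmul (a0+a1*k) x + zsmul (b0+b1*k) y" and ?Q = "zsmul c x + zsmul d y"
    have e1: "?P + zsmul k ?Q = zsmul (a0+(a1+c)*k) x + zsmul (b0+(b1+d)*k) y"
      unfolding pt_scale pt_add by (simp add: algebra_simps)
    have e2: "?P - zsmul k ?Q = zsmul (a0+(a1-c)*k) x + zsmul (b0+(b1-d)*k) y"
      unfolding pt_scale pt_diff by (simp add: algebra_simps)
    have e3: "?P + ?Q = zsmul ((a0+c)+a1*k) x + zsmul ((b0+d)+b1*k) y"
      unfolding pt_add by (simp add: algebra_simps)
    have e4: "?P - ?Q = zsmul ((a0-c)+a1*k) x + zsmul ((b0-d)+b1*k) y"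
      unfolding pt_diff by (simp add: algebra_simps)
    have "Dop sc k C ?P ?Q = 0" by (rule D0)
    then show ?thesis unfolding RD Dop_def e1 e2 e3 e4
      by (simp add: w_def algebra_simps power2_eq_square)
  next
    case (RO a0 a1 b0 b1)
    have "zsmul (-a0 + -a1*k) x + zsmul (-b0 + -b1*k) y = - (zsmul (a0+a1*k) x + zsmul (b0+b1*k) y)"
      unfolding pt_neg by (simp add: algebra_simps)
    then have "w (-a0,-a1,-b0,-b1) = - w (a0,a1,b0,b1)" unfolding w_def by (simp only: prod.case odd)
    then show ?thesis unfolding RO by simp
  next
    case (RH a0 a1 b0 b1)
    have zs2: "zsmul 2 z = nsmul 2 z" for z :: 'a using zsmul_int[of 2 z] by simp
    have "nsmul 2 (zsmul (a0+a1*k) x + zsmul (b0+b1*k) y) = zsmul (2*(a0+a1*k)) x + zsmul (2*(b0+b1*k)) y"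
      unfolding zs2[symmetric] pt_scale ..
    also have "\<dots> = zsmul (2*a0 + 2*a1*k) x + zsmul (2*b0 + 2*b1*k) y"
      by (simp add: algebra_simps)
    finally have "w (2*a0,2*a1,2*b0,2*b1) = sc 8 (w (a0,a1,b0,b1))" unfolding w_def
      by (simp only: prod.case hom[symmetric] mult.assoc)
    then show ?thesis unfolding RH by simp
  qed
  have "lcp sc w k (combo cubL) = 0" by (rule lcp_combo_zero) (rule rel0)
  then have "lcp sc w k (nf cubT) = 0" by (simp only: lcp_nf cub_check[symmetric])
  then have z: "sc (of_int (peval [0,0,-4,0,4] k)) (lcp sc w k cubB) = 0"
    by (simp only: lcp_nf cubT_def lcp_pscale)
  have "(of_int (peval [0,0,-4,0,4] k) :: 'k) = 4 * of_int (k^2 * (k^2 - 1))"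
    by (simp add: algebra_simps power2_eq_square power4_eq_xxxx)
  moreover have "(4::'k) \<noteq> 0" using two by (metis mult_2 numeral_Bit0 mult_eq_0_iff one_add_one)
  ultimately have "(of_int (peval [0,0,-4,0,4] k) :: 'k) \<noteq> 0" using kk by simp
  with z have base: "lcp sc w k cubB = 0" by simp
  have zs2: "zsmul 2 z = nsmul 2 z" for z :: 'a using zsmul_int[of 2 z] by simp
  have zsm1: "zsmul (-1) z = - z" for z :: 'a using zsmul_neg[of 1 z] by simp
  from base show "C (nsmul 2 x + y) + C (nsmul 2 x - y) =
      nsmul 2 (C (x + y)) + nsmul 2 (C (x - y)) + nsmul 12 (C x)"
    by (simp add: cubB_def w_def zs2 zsm1 nsmul_scale algebra_simps)
qed

definition LBD :: "(int list \<times> rel) list" where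
  "LBD = [([(-3),0,4], RD 1 0 0 0 1 0),
    ([0,0,(-2)], RD 2 0 0 0 1 0),
    ([0,0,2], RD 1 0 0 0 2 0),
    ([(-2)], RD 1 1 0 0 1 0),
    ([2], RD (-1) 1 0 0 1 0),
    ([0,0,(-1)], RD 2 0 0 0 2 0),
    ([1], RD 1 0 0 0 3 0),
    ([(-1)], RD 1 2 0 0 1 0),
    ([1], RD (-1) 2 0 0 1 0)]"
definition LBO :: "(int list \<times> rel) list" where
  "LBO = [([0,0,1], RO (-2) 0 0 0),
    ([0,0,2], RO (-2) 1 0 0),
    ([0,0,1], RO (-2) 2 0 0),
    ([(-2),0,0,0,2], RO (-1) 0 0 0),
    ([3,0,(-4)], RO (-1) 1 0 0),
    ([0,0,(-2)], RO (-1) 2 0 0),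
    ([(-1)], RO (-1) 3 0 0)]"
definition TB :: "(int list \<times> pt) list" where
  "TB = pscale [0,0,-1,0,1] [([1],(4,0,0,0)), ([-10],(2,0,0,0)), ([16],(1,0,0,0))] @ [([0,0,3,0,-3],(0,0,0,0))]"

lemma B_check: "nf (combo (LBD @ LBO)) = nf TB"
  by code_simp

lemma partB_identity:
  fixes sc :: "'k::field \<Rightarrow> 'x::ab_group_add \<Rightarrow> 'x" and f :: "'a::ab_group_add \<Rightarrow> 'x"
  assumes vs: "vector_space sc" and two: "(2::'k) \<noteq> 0"
    and odd: "\<And>x. f (- x) = - f x"
  shows "sc (of_int (k^2 * (k^2 - 1))) (f (nsmul 2 (nsmul 2 u)) - sc 2 (f (nsmul 2 u)) - sc 8 (f (nsmul 2 u) - sc 2 (f u)))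
    = sc (of_int (4*k^2 - 3)) (Dop sc k f u u) + sc (of_int (-2*k^2)) (Dop sc k f (nsmul 2 u) u)
      + sc (of_int (2*k^2)) (Dop sc k f u (nsmul 2 u)) + sc (of_int (-2)) (Dop sc k f (zsmul (k+1) u) u)
      + sc (of_int 2) (Dop sc k f (zsmul (k-1) u) u) + sc (of_int (-(k^2))) (Dop sc k f (nsmul 2 u) (nsmul 2 u))
      + Dop sc k f u (nsmul 3 u) - Dop sc k f (zsmul (2*k+1) u) u + Dop sc k f (zsmul (2*k-1) u) u"
proof -
  interpret vector_space sc by (rule vs)
  define w :: "pt \<Rightarrow> 'x" where "w = (\<lambda>(a0,a1,b0,b1). f (zsmul (a0+a1*k) u + zsmul (b0+b1*k) (0::'a)))"
  have f0: "f 0 = 0"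
  proof -
    have "f 0 = - f 0" using odd[of 0] by simp
    then have "f 0 + f 0 = 0" by (metis add.right_inverse)
    moreover have "sc 2 (f 0) = f 0 + f 0" using scale_left_distrib[of 1 1 "f 0"] by simp
    ultimately have "sc 2 (f 0) = 0" by simp
    then show ?thesis using two by simp
  qed
  have zO: "lcp sc w k (combo LBO) = 0"
  proof (rule lcp_combo_zero'[OF vs])
    fix c r assume "(c, r) \<in> set LBO"
    then obtain a0 a1 b0 b1 where r: "r = RO a0 a1 b0 b1" unfolding LBO_def by auto
    have "zsmul (-a0 + -a1*k) u + zsmul (-b0 + -b1*k) (0::'a) = - (zsmul (a0+a1*k) u + zsmul (b0+b1*k) 0)"
      unfolding pt_neg by (simp add: algebra_simps)
    then have "w (-a0,-a1,-b0,-b1) = - w (a0,a1,b0,b1)" unfolding w_def by (simp only: prod.case odd)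
    then show "lcp sc w k (relf r) = 0" unfolding r by simp
  qed
  have "lcp sc w k (nf (combo (LBD @ LBO))) = lcp sc w k (nf TB)" by (simp only: B_check)
  then have "lcp sc w k (combo (LBD @ LBO)) = lcp sc w k TB" by (simp only: lcp_nf)
  then have eq: "lcp sc w k (combo LBD) = lcp sc w k TB"
    using zO by (simp add: combo_def)
  have n4: "zsmul 4 u = nsmul 2 (nsmul 2 u)" using nsmul_mult[of 2 2 u] zsmul_int[of 4 u] by simp
  have n2: "zsmul 2 u = nsmul 2 u" using zsmul_int[of 2 u] by simp
  have n4': "nsmul 2 (nsmul 2 u) = nsmul 4 u" using nsmul_mult[of 2 2 u] by simp
  have w4: "w (4,0,0,0) = f (nsmul 2 (nsmul 2 u))" by (simp add: w_def n4')
  have w2: "w (2,0,0,0) = f (nsmul 2 u)" by (simp add: w_def n2)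
  have w1: "w (1,0,0,0) = f u" by (simp add: w_def)
  have w0: "w (0,0,0,0) = 0" by (simp add: w_def f0)
  have pe: "peval [0,0,-1,0,1] k = k^2 * (k^2 - 1)"
    by (simp add: algebra_simps power2_eq_square)
  have s10: "sc 2 a + sc 8 a = sc (of_int 10) a" for a using scale_left_distrib[of 2 8 a] by simp
  have inner: "f (nsmul 2 (nsmul 2 u)) - sc 2 (f (nsmul 2 u)) - sc 8 (f (nsmul 2 u) - sc 2 (f u))
     = sc (of_int 1) (f (nsmul 2 (nsmul 2 u))) + (sc (of_int (-10)) (f (nsmul 2 u)) + (sc (of_int 16) (f u) + 0))"
  proof -
    have "sc 8 (sc 2 (f u)) = sc (of_int 16) (f u)" by simp
    then show ?thesis using s10[of "f (nsmul 2 u)"] by (simp add: algebra_simps scale_right_diff_distrib)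
  qed
  have lhs: "lcp sc w k TB = sc (of_int (k^2 * (k^2 - 1))) (f (nsmul 2 (nsmul 2 u)) - sc 2 (f (nsmul 2 u)) - sc 8 (f (nsmul 2 u) - sc 2 (f u)))"
    unfolding TB_def lcp_append lcp_pscale inner pe by (simp add: w4 w2 w1 w0)
  have d1: "Dop sc k f (zsmul (1 + 0 * k) u + zsmul (0 + 0 * k) 0) (zsmul 1 u + zsmul 0 0) = Dop sc k f u u" by simp
  have "lcp sc w k (combo LBD) = sc (of_int (peval [-3,0,4] k)) (Dop sc k f (zsmul (1 + 0 * k) u + zsmul (0 + 0 * k) 0) (zsmul 1 u + zsmul 0 0))
     + (sc (of_int (peval [0,0,-2] k)) (Dop sc k f (zsmul (2 + 0 * k) u + zsmul (0 + 0 * k) 0) (zsmul 1 u + zsmul 0 0))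
     + (sc (of_int (peval [0,0,2] k)) (Dop sc k f (zsmul (1 + 0 * k) u + zsmul (0 + 0 * k) 0) (zsmul 2 u + zsmul 0 0))
     + (sc (of_int (peval [-2] k)) (Dop sc k f (zsmul (1 + 1 * k) u + zsmul (0 + 0 * k) 0) (zsmul 1 u + zsmul 0 0))
     + (sc (of_int (peval [2] k)) (Dop sc k f (zsmul (-1 + 1 * k) u + zsmul (0 + 0 * k) 0) (zsmul 1 u + zsmul 0 0))
     + (sc (of_int (peval [0,0,-1] k)) (Dop sc k f (zsmul (2 + 0 * k) u + zsmul (0 + 0 * k) 0) (zsmul 2 u + zsmul 0 0))
     + (sc (of_int (peval [1] k)) (Dop sc k f (zsmul (1 + 0 * k) u + zsmul (0 + 0 * k) 0) (zsmul 3 u + zsmul 0 0))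
     + (sc (of_int (peval [-1] k)) (Dop sc k f (zsmul (1 + 2 * k) u + zsmul (0 + 0 * k) 0) (zsmul 1 u + zsmul 0 0))
     + (sc (of_int (peval [1] k)) (Dop sc k f (zsmul (-1 + 2 * k) u + zsmul (0 + 0 * k) 0) (zsmul 1 u + zsmul 0 0))
     + 0))))))))"
    unfolding lcp_combo LBD_def w_def
    by (simp only: list.map prod.case sum_list.Cons sum_list.Nil lcp_RD[OF vs])
  then show ?thesis using eq lhs
    by (simp add: algebra_simps power2_eq_square)
qed

section \<open>Valuation\<close>

lemma val_facts:
  assumes "nonarch_valuation v"
  shows val_nonneg: "0 \<le> v r" and val_zero: "v r = 0 \<longleftrightarrow> r = 0"
    and val_mult: "v (r * s) = v r * v s" and val_max: "v (r + s) \<le> max (v r) (v s)"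
  using assms unfolding nonarch_valuation_def by auto

lemma val_one: assumes "nonarch_valuation v" shows "v 1 = 1"
proof -
  have "v 1 = v 1 * v 1" using val_mult[OF assms, of 1 1] by simp
  moreover have "v 1 \<noteq> 0" using val_zero[OF assms, of 1] by simp
  ultimately show ?thesis by (metis mult_cancel_left1)
qed

lemma val_minus: assumes "nonarch_valuation v" shows "v (- r) = v r"
proof -
  have "(1::real) = v 1" using val_one[OF assms] by simp
  also have "\<dots> = v ((-1) * (-1))" by simp
  also have "\<dots> = v (-1) * v (-1)" by (rule val_mult[OF assms])
  finally have e: "v (-1) * v (-1) = 1" by simp
  have "0 \<le> v (-1)" by (rule val_nonneg[OF assms])
  have "(v (-1) - 1) * (v (-1) + 1) = 0" using e by (simp add: algebra_simps)
  moreover have "v (-1) + 1 \<noteq> 0" using \<open>0 \<le> v (-1)\<close> by simp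
  ultimately have "v (-1) = 1" by simp
  then show ?thesis using val_mult[OF assms, of "-1" r] by simp
qed

lemma val_of_nat_le: assumes "nonarch_valuation v" shows "v (of_nat n) \<le> 1"
proof (induction n)
  case 0 then show ?case using val_zero[OF assms, of 0] by simp
next
  case (Suc n)
  have "v (1 + of_nat n) \<le> max (v 1) (v (of_nat n))" by (rule val_max[OF assms])
  then show ?case using Suc val_one[OF assms] by simp
qed

lemma val_of_int_le: assumes "nonarch_valuation v" shows "v (of_int n) \<le> 1"
proof (cases n rule: int_cases)
  case (nonneg m) then show ?thesis using val_of_nat_le[OF assms, of m] by simp
next
  case (neg m)
  then have "(of_int n :: 'a) = - of_nat (Suc m)" by simp
  then show ?thesis using val_of_nat_le[OF assms, of "Suc m"] val_minus[OF assms, of "1 + of_nat m"] by simp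
qed

lemma val_numeral_le: assumes "nonarch_valuation v" shows "v (numeral n) \<le> 1"
  using val_of_nat_le[OF assms, of "numeral n"] by simp

lemma val_power: assumes "nonarch_valuation v" shows "v (r ^ n) = v r ^ n"
  by (induction n) (auto simp: val_one[OF assms] val_mult[OF assms])

lemma val_pos: assumes "nonarch_valuation v" "r \<noteq> 0" shows "0 < v r"
  using val_nonneg[OF assms(1), of r] val_zero[OF assms(1), of r] assms(2) by linarith

lemma val_inverse: assumes "nonarch_valuation v" "r \<noteq> 0" shows "v (1 / r) = 1 / v r"
proof -
  have "v (1 / r) * v r = 1" using val_mult[OF assms(1), of "1/r" r] val_one[OF assms(1)] assms(2) by simp
  moreover have "v r \<noteq> 0" using val_pos[OF assms] by simp
  ultimately show ?thesis by (simp add: field_simps)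
qed

section \<open>Norm\<close>

lemma nrm_facts:
  assumes "nonarch_normed_space v sc nrm"
  shows nrm_vs: "vector_space sc" and nrm_nonneg: "0 \<le> nrm x" and nrm_zero: "nrm x = 0 \<longleftrightarrow> x = 0"
    and nrm_scale: "nrm (sc r x) = v r * nrm x" and nrm_max: "nrm (x + y) \<le> max (nrm x) (nrm y)"
  using assms unfolding nonarch_normed_space_def by auto

lemma nrm_minus:
  assumes "nonarch_valuation v" "nonarch_normed_space v sc nrm"
  shows "nrm (- x) = nrm x"
proof -
  interpret vector_space sc by (rule nrm_vs[OF assms(2)])
  have "- x = sc (-1) x" by simp
  then show ?thesis using nrm_scale[OF assms(2), of "-1" x] val_minus[OF assms(1), of 1] val_one[OF assms(1)] by simp
qed

lemma nrm_add_le: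
  assumes "nonarch_normed_space v sc nrm" "nrm x \<le> M" "nrm y \<le> M"
  shows "nrm (x + y) \<le> M"
  using nrm_max[OF assms(1), of x y] assms(2,3) by simp

lemma nrm_diff_le:
  assumes "nonarch_valuation v" "nonarch_normed_space v sc nrm" "nrm x \<le> M" "nrm y \<le> M"
  shows "nrm (x - y) \<le> M"
  using nrm_add_le[OF assms(2), of x M "-y"] nrm_minus[OF assms(1,2), of y] assms(3,4) by simp

lemma nrm_diff_max:
  assumes "nonarch_valuation v" "nonarch_normed_space v sc nrm"
  shows "nrm (x - y) \<le> max (nrm x) (nrm y)"
  by (rule nrm_diff_le[OF assms]) auto

lemma nrm_commute:
  assumes "nonarch_valuation v" "nonarch_normed_space v sc nrm"
  shows "nrm (x - y) = nrm (y - x)"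
  using nrm_minus[OF assms, of "x - y"] by simp

lemma nrm_tri:
  assumes "nonarch_valuation v" "nonarch_normed_space v sc nrm"
  shows "nrm (x - z) \<le> max (nrm (x - y)) (nrm (y - z))"
  using nrm_max[OF assms(2), of "x - y" "y - z"] by simp

lemma zero_by_bound:
  assumes "nonarch_normed_space v sc nrm" "\<And>n. nrm z \<le> e n" "e \<longlonglongrightarrow> 0"
  shows "z = 0"
proof -
  have "nrm z \<le> 0" using assms(2) by (intro LIMSEQ_le_const[OF assms(3)]) auto
  then show ?thesis using nrm_nonneg[OF assms(1), of z] nrm_zero[OF assms(1), of z] by simp
qed

lemma le_by_max_bound:
  fixes a b :: real
  assumes "\<And>n. a \<le> max b (e n)" "e \<longlonglongrightarrow> 0" "0 \<le> b"
  shows "a \<le> b"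
proof (rule ccontr)
  assume "\<not> a \<le> b"
  then have "a - b > 0" by simp
  then obtain N where "\<forall>n\<ge>N. dist (e n) 0 < a - b" using assms(2) LIMSEQ_def by metis
  then have "e N < a" using assms(3) by auto
  then show False using assms(1)[of N] \<open>\<not> a \<le> b\<close> by linarith
qed

lemma nrm_scale_int_le:
  assumes "nonarch_valuation v" "nonarch_normed_space v sc nrm" "nrm D \<le> M"
  shows "nrm (sc (of_int c) D) \<le> M"
proof -
  have "nrm (sc (of_int c) D) = v (of_int c) * nrm D" by (rule nrm_scale[OF assms(2)])
  also have "\<dots> \<le> 1 * nrm D"
    by (rule mult_right_mono[OF val_of_int_le[OF assms(1)] nrm_nonneg[OF assms(2)]])
  finally show ?thesis using assms(3) by simp
qed

lemma partB_bound:
  fixes sc :: "'k::field \<Rightarrow> 'x::ab_group_add \<Rightarrow> 'x" and f :: "'a::ab_group_add \<Rightarrow> 'x"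
  assumes val: "nonarch_valuation v" and space: "nonarch_normed_space v sc nrm"
    and two: "(2::'k) \<noteq> 0" and odd: "\<And>x. f (- x) = - f x"
    and ineq: "\<And>x y. nrm (Dop sc k f x y) \<le> \<phi> x y"
  shows "v (of_int (k^2 * (k^2 - 1))) * nrm (f (nsmul 2 (nsmul 2 u)) - sc 2 (f (nsmul 2 u)) - sc 8 (f (nsmul 2 u) - sc 2 (f u)))
     \<le> Phi v k \<phi> u"
proof -
  have vs: "vector_space sc" by (rule nrm_vs[OF space])
  let ?P = "Phi v k \<phi> u"
  have mem: "e \<le> ?P" if "e \<in> {
      v (of_int (2 * (k^2 - 1))) * \<phi> u u,
      v (of_int (k^2)) * \<phi> (nsmul 2 u) u,
      \<phi> u (nsmul 2 u),
      \<phi> (zsmul (k + 1) u) u,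
      \<phi> (zsmul (k - 1) u) u,
      \<phi> u u,
      v (of_int (k^2)) * \<phi> (nsmul 2 u) (nsmul 2 u),
      v (of_int (2 * (k^2 - 1))) * \<phi> u (nsmul 2 u),
      \<phi> u (nsmul 3 u),
      \<phi> (zsmul (2 * k + 1) u) u,
      \<phi> (zsmul (2 * k - 1) u) u}" for e
    unfolding Phi_def by (rule Max_ge) (use that in auto)
  have b: "nrm (Dop sc k f x y) \<le> ?P" if "\<phi> x y \<le> ?P" for x y using ineq[of x y] that by simp
  have bs: "nrm (sc (of_int c) (Dop sc k f x y)) \<le> ?P" if "\<phi> x y \<le> ?P" for c x y
    by (rule nrm_scale_int_le[OF val space b[OF that]])
  have bk: "nrm (sc (of_int (c * k^2)) (Dop sc k f x y)) \<le> ?P"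
    if "v (of_int (k^2)) * \<phi> x y \<le> ?P" for c x y
  proof -
    have "nrm (sc (of_int (c * k^2)) (Dop sc k f x y)) = v (of_int c) * (v (of_int (k^2)) * nrm (Dop sc k f x y))"
      by (simp add: nrm_scale[OF space] val_mult[OF val])
    also have "\<dots> \<le> 1 * (v (of_int (k^2)) * \<phi> x y)"
      by (intro mult_mono val_of_int_le[OF val] mult_left_mono ineq val_nonneg[OF val]
          mult_nonneg_nonneg nrm_nonneg[OF space]) simp
    finally show ?thesis using that by simp
  qed
  have t1: "nrm (sc (of_int (4 * k^2 - 3)) (Dop sc k f u u)) \<le> ?P" by (rule bs, rule mem, simp)
  have t2: "nrm (sc (of_int (- 2 * k^2)) (Dop sc k f (nsmul 2 u) u)) \<le> ?P"
    by (rule bk[where c="-2"], rule mem, simp)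
  have t3: "nrm (sc (of_int (2 * k^2)) (Dop sc k f u (nsmul 2 u))) \<le> ?P" by (rule bs, rule mem, simp)
  have t4: "nrm (sc (of_int (- 2)) (Dop sc k f (zsmul (k + 1) u) u)) \<le> ?P" by (rule bs, rule mem, simp)
  have t5: "nrm (sc (of_int 2) (Dop sc k f (zsmul (k - 1) u) u)) \<le> ?P" by (rule bs, rule mem, simp)
  have t6: "nrm (sc (of_int (- (k^2))) (Dop sc k f (nsmul 2 u) (nsmul 2 u))) \<le> ?P"
    using bk[where c="-1" and x="nsmul 2 u" and y="nsmul 2 u"] mem by simp
  have t7: "nrm (Dop sc k f u (nsmul 3 u)) \<le> ?P" by (rule b, rule mem, simp)
  have t8: "nrm (Dop sc k f (zsmul (2 * k + 1) u) u) \<le> ?P" by (rule b, rule mem, simp)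
  have t9: "nrm (Dop sc k f (zsmul (2 * k - 1) u) u) \<le> ?P" by (rule b, rule mem, simp)
  have "v (of_int (k^2 * (k^2 - 1))) * nrm (f (nsmul 2 (nsmul 2 u)) - sc 2 (f (nsmul 2 u)) - sc 8 (f (nsmul 2 u) - sc 2 (f u)))
     = nrm (sc (of_int (k^2 * (k^2 - 1))) (f (nsmul 2 (nsmul 2 u)) - sc 2 (f (nsmul 2 u)) - sc 8 (f (nsmul 2 u) - sc 2 (f u))))"
    by (simp add: nrm_scale[OF space])
  also have "\<dots> \<le> ?P"
    unfolding partB_identity[where f=f and k=k and u=u, OF vs two odd]
    by (intro nrm_add_le[OF space] nrm_diff_le[OF val space] t1 t2 t3 t4 t5 t6 t7 t8 t9)
  finally show ?thesis .
qed


section \<open>Dop algebra\<close>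

lemma nsmul_zsmul_comm: "nsmul m (zsmul k y) = zsmul k (nsmul m (y::'a::ab_group_add))"
proof -
  have "nsmul m (zsmul k y) = zsmul (int m * k) y" by (simp add: zsmul_mult)
  also have "\<dots> = zsmul (k * int m) y" by (simp add: mult.commute)
  also have "\<dots> = zsmul k (nsmul m y)" by (simp add: zsmul_mult)
  finally show ?thesis .
qed

lemma nsmul_diff: "nsmul m (a - b) = nsmul m a - nsmul m (b::'a::ab_group_add)"
  using nsmul_plus[of m a "-b"] nsmul_minus[of m b] by simp

lemma Dop_comp: "Dop sc k (\<lambda>z. g (nsmul m z)) x y = Dop sc k g (nsmul m x) (nsmul m y)"
  unfolding Dop_def by (simp add: nsmul_plus nsmul_diff nsmul_zsmul_comm)

lemma Dop_scale:
  assumes "vector_space sc"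
  shows "Dop sc k (\<lambda>z. sc r (g z)) x y = sc r (Dop sc k g x y)"
proof -
  interpret vector_space sc by fact
  show ?thesis unfolding Dop_def by (simp add: scale_right_diff_distrib scale_right_distrib mult.commute)
qed

lemma Dop_diff:
  assumes "vector_space sc"
  shows "Dop sc k (\<lambda>z. g1 z - g2 z) x y = Dop sc k g1 x y - Dop sc k g2 x y"
proof -
  interpret vector_space sc by fact
  show ?thesis unfolding Dop_def by (simp add: scale_right_diff_distrib algebra_simps)
qed

lemma Dop_bound:
  assumes val: "nonarch_valuation v" and space: "nonarch_normed_space v sc nrm"
  shows "nrm (Dop sc k g x y) \<le> max (nrm (g (x + zsmul k y))) (max (nrm (g (x - zsmul k y)))
      (max (nrm (g (x + y))) (max (nrm (g (x - y))) (nrm (g x)))))" (is "_ \<le> ?M")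
  unfolding Dop_def
  by (intro nrm_add_le[OF space] nrm_diff_le[OF val space] nrm_scale_int_le[OF val space]) auto


lemma Dop_null:
  assumes val: "nonarch_valuation v" and space: "nonarch_normed_space v sc nrm"
    and lim: "\<And>p. (\<lambda>n. nrm (g n p)) \<longlonglongrightarrow> 0"
  shows "(\<lambda>n. nrm (Dop sc k (g n) x y)) \<longlonglongrightarrow> 0"
proof (rule tendsto_sandwich[of "\<lambda>n. 0" _ _ "\<lambda>n. max (nrm (g n (x + zsmul k y))) (max (nrm (g n (x - zsmul k y)))
      (max (nrm (g n (x + y))) (max (nrm (g n (x - y))) (nrm (g n x)))))"])
  show "\<forall>\<^sub>F n in sequentially. 0 \<le> nrm (Dop sc k (g n) x y)" using nrm_nonneg[OF space] by simp
  show "\<forall>\<^sub>F n in sequentially. nrm (Dop sc k (g n) x y) \<le> max (nrm (g n (x + zsmul k y))) (max (nrm (g n (x - zsmul k y)))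
      (max (nrm (g n (x + y))) (max (nrm (g n (x - y))) (nrm (g n x)))))"
    by (rule always_eventually, rule allI, rule Dop_bound[OF val space])
  show "(\<lambda>n. 0) \<longlonglongrightarrow> (0::real)" by simp
  show "(\<lambda>n. max (nrm (g n (x + zsmul k y))) (max (nrm (g n (x - zsmul k y)))
      (max (nrm (g n (x + y))) (max (nrm (g n (x - y))) (nrm (g n x)))))) \<longlonglongrightarrow> 0"
    using tendsto_max[OF lim tendsto_max[OF lim tendsto_max[OF lim tendsto_max[OF lim lim]]]] by simp
qed

theorem theorem2p3:
  fixes v :: "'k::field \<Rightarrow> real"
    and sc :: "'k \<Rightarrow> 'x::ab_group_add \<Rightarrow> 'x"
    and nrm :: "'x \<Rightarrow> real"
    and k :: int
    and \<phi> :: "'a::ab_group_add \<Rightarrow> 'a \<Rightarrow> real"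
    and f :: "'a \<Rightarrow> 'x"
  assumes val: "nonarch_valuation v" and nontriv: "nontrivial_valuation v"
    and space: "nonarch_normed_space v sc nrm" and complete: "norm_complete nrm"
    and k: "k \<noteq> 0" "k \<noteq> 1" "k \<noteq> -1"
    and two_ne0: "(2::'k) \<noteq> 0" and kk_ne0: "(of_int (k^2 * (k^2 - 1)) :: 'k) \<noteq> 0"
    and phi_nonneg: "\<And>x y. 0 \<le> \<phi> x y"
    and lim1: "\<And>x y. (\<lambda>n. (1 / v (8 ^ n)) *
                 max (\<phi> (nsmul (2 ^ (n + 1)) x) (nsmul (2 ^ (n + 1)) y))
                     (v 2 * \<phi> (nsmul (2 ^ n) x) (nsmul (2 ^ n) y))) \<longlonglongrightarrow> 0"
    and lim2: "\<And>x. (\<lambda>n. (1 / v (8 ^ n * of_int (k^2 * (k^2 - 1)))) *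
                 Phi v k \<phi> (nsmul (2 ^ (n - 1)) x)) \<longlonglongrightarrow> 0"
    and conv: "\<And>x. convergent (\<lambda>n. Max ((\<lambda>i. (1 / v (8 ^ i)) * Phi v k \<phi> (nsmul (2 ^ (i - 1)) x)) ` {..<n}))"
    and odd: "\<And>x. f (- x) = - f x"
    and ineq: "\<And>x y. nrm (Dop sc k f x y) \<le> \<phi> x y"
  shows "\<exists>C. cubic C \<and>
     (\<forall>x. nrm (f (nsmul 2 x) - sc 2 (f x) - C x)
            \<le> (1 / v (8 * of_int (k^2 * (k^2 - 1)))) *
              lim (\<lambda>n. Max ((\<lambda>i. (1 / v (8 ^ i)) * Phi v k \<phi> (nsmul (2 ^ (i - 1)) x)) ` {..<n}))) \<and>
     ((\<forall>x. (\<forall>i. convergent (\<lambda>n. Max ((\<lambda>j. (1 / v (8 ^ j)) * Phi v k \<phi> (nsmul (2 ^ (j - 1)) x)) ` {i..<n + i})))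
           \<and> (\<lambda>i. lim (\<lambda>n. Max ((\<lambda>j. (1 / v (8 ^ j)) * Phi v k \<phi> (nsmul (2 ^ (j - 1)) x)) ` {i..<n + i}))) \<longlonglongrightarrow> 0)
      \<longrightarrow> (\<forall>C'. cubic C' \<and>
             (\<forall>x. nrm (f (nsmul 2 x) - sc 2 (f x) - C' x)
                   \<le> (1 / v (8 * of_int (k^2 * (k^2 - 1)))) *
                     lim (\<lambda>n. Max ((\<lambda>i. (1 / v (8 ^ i)) * Phi v k \<phi> (nsmul (2 ^ (i - 1)) x)) ` {..<n})))
           \<longrightarrow> C' = C))"
proof -
  have vs: "vector_space sc" by (rule nrm_vs[OF space])
  interpret vector_space sc by (rule vs)
  define kk :: 'k where "kk = of_int (k^2 * (k^2 - 1))"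
  define c0 where "c0 = 1 / v kk"
  have kk0: "kk \<noteq> 0" using kk_ne0 kk_def by simp
  have vkk: "0 < v kk" using val_pos[OF val kk0] .
  have c0pos: "0 < c0" using vkk c0_def by simp
  have eight: "(8::'k) \<noteq> 0"
  proof -
    have "(8::'k) = 2 * 2 * 2" by simp
    then show ?thesis using two_ne0 by (simp only: mult_eq_0_iff) simp
  qed
  have v8pos: "0 < v (8::'k)" using val_pos[OF val eight] .
  have v8le: "v (8::'k) \<le> 1" using val_numeral_le[OF val] .
  have v8n: "v ((8::'k) ^ n) = v 8 ^ n" for n using val_power[OF val] .
  have v8npos: "0 < v ((8::'k) ^ n)" for n using v8n v8pos by simp
  have v1_8n: "v (1 / (8::'k) ^ n) = 1 / v (8 ^ n)" for n
    using val_inverse[OF val] eight by simp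
  define h where "h z = f (nsmul 2 z) - sc 2 (f z)" for z
  define Ph where "Ph = Phi v k \<phi>"
  define t where "t x i = (1 / v (8 ^ i)) * Ph (nsmul (2 ^ (i - 1)) x)" for x i
  define s where "s x n = sc (1 / 8 ^ n) (h (nsmul (2 ^ n) x))" for x n
  have Ph_nonneg: "0 \<le> Ph u" for u
  proof -
    have "\<phi> u u \<le> Ph u" unfolding Ph_def Phi_def by (rule Max_ge) auto
    then show ?thesis using phi_nonneg[of u u] by simp
  qed
  have t_nonneg: "0 \<le> t x i" for x i unfolding t_def using Ph_nonneg v8npos
    by (simp add: less_imp_le)
  have stepB: "nrm (h (nsmul 2 u) - sc 8 (h u)) \<le> c0 * Ph u" for u
  proof -
    have "v kk * nrm (h (nsmul 2 u) - sc 8 (h u)) \<le> Ph u"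
      unfolding h_def kk_def Ph_def by (rule partB_bound[OF val space two_ne0 odd ineq])
    then show ?thesis unfolding c0_def using vkk by (simp add: field_simps)
  qed
  have n2n: "nsmul (2 ^ Suc n) x = nsmul 2 (nsmul (2 ^ n) x)" for n and x :: 'a
    using nsmul_mult[of 2 "2^n" x] by simp
  have sc8: "sc (1 / 8 ^ n) z = sc (1 / 8 ^ Suc n) (sc 8 z)" for n z
    using eight by (simp add: field_simps)
  have stepS: "nrm (s x (Suc n) - s x n) \<le> c0 * t x (Suc n)" for x n
  proof -
    have "s x (Suc n) - s x n = sc (1 / 8 ^ Suc n) (h (nsmul 2 (nsmul (2 ^ n) x)) - sc 8 (h (nsmul (2 ^ n) x)))"
      unfolding s_def n2n sc8[of n] by (simp add: scale_right_diff_distrib)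
    then have "nrm (s x (Suc n) - s x n) = nrm (sc (1 / 8 ^ Suc n) (h (nsmul 2 (nsmul (2 ^ n) x)) - sc 8 (h (nsmul (2 ^ n) x))))" by simp
    also have "\<dots> = (1 / v (8 ^ Suc n)) * nrm (h (nsmul 2 (nsmul (2 ^ n) x)) - sc 8 (h (nsmul (2 ^ n) x)))"
      unfolding nrm_scale[OF space] v1_8n by (rule refl)
    also have "\<dots> \<le> (1 / v (8 ^ Suc n)) * (c0 * Ph (nsmul (2 ^ n) x))"
      by (rule mult_left_mono[OF stepB]) (use v8npos[of "Suc n"] in \<open>simp only: zero_le_divide_1_iff less_imp_le\<close>)
    also have "\<dots> = c0 * t x (Suc n)" unfolding t_def by simp
    finally show ?thesis .
  qed
  have tele: "nrm (s x n - s x m) \<le> e" if "m \<le> n" "\<And>i. m < i \<Longrightarrow> i \<le> n \<Longrightarrow> c0 * t x i \<le> e" "0 \<le> e"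
    for x m n e
    using that
  proof (induction n rule: dec_induct)
    case base then show ?case using nrm_zero[OF space, of 0] by simp
  next
    case (step n)
    have "s x (Suc n) - s x m = (s x (Suc n) - s x n) + (s x n - s x m)" by simp
    moreover have "nrm (s x (Suc n) - s x n) \<le> e"
      using step.hyps step.prems(1)[of "Suc n"] stepS[of x n] by simp
    moreover have "nrm (s x n - s x m) \<le> e" using step by simp
    ultimately show ?case using nrm_add_le[OF space] by metis
  qed
  have tlim: "(\<lambda>i. c0 * t x i) \<longlonglongrightarrow> 0" for x
  proof -
    have "(1 / v (8 ^ n * of_int (k^2 * (k^2 - 1)))) * Phi v k \<phi> (nsmul (2 ^ (n - 1)) x) = c0 * t x n" for n
      unfolding c0_def t_def Ph_def kk_def[symmetric] using val_mult[OF val, of "8^n" kk] by simp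
    then show ?thesis using lim2[of x] by simp
  qed
  have cauchy: "\<forall>e>0. \<exists>N. \<forall>m\<ge>N. \<forall>n\<ge>N. nrm (s x m - s x n) < e" for x
  proof (intro allI impI)
    fix e :: real assume e: "0 < e"
    obtain N where N: "\<And>i. i \<ge> N \<Longrightarrow> c0 * t x i < e / 2"
      using tlim[of x] e unfolding LIMSEQ_def
      by (metis dist_real_def diff_zero half_gt_zero abs_of_nonneg less_imp_le mult_nonneg_nonneg t_nonneg c0pos)
    have le: "nrm (s x n - s x m) \<le> e / 2" if "N \<le> m" "m \<le> n" for m n
      by (rule tele) (use that N e in \<open>auto intro: less_imp_le\<close>)
    show "\<exists>N. \<forall>m\<ge>N. \<forall>n\<ge>N. nrm (s x m - s x n) < e"
    proof (intro exI allI impI)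
      fix m n assume "N \<le> m" "N \<le> n"
      then have "nrm (s x m - s x n) \<le> e / 2"
        using le[of m n] le[of n m] nrm_commute[OF val space, of "s x m" "s x n"] by (cases "m \<le> n") auto
      then show "nrm (s x m - s x n) < e" using e by simp
    qed
  qed
  have "\<forall>x. \<exists>l. (\<lambda>n. nrm (s x n - l)) \<longlonglongrightarrow> 0"
    using complete cauchy unfolding norm_complete_def by blast
  then obtain C where Clim: "\<And>x. (\<lambda>n. nrm (s x n - C x)) \<longlonglongrightarrow> 0" by metis
  define M where "M x n = Max ((\<lambda>i. (1 / v (8 ^ i)) * Phi v k \<phi> (nsmul (2 ^ (i - 1)) x)) ` {..<n})" for x n
  define L where "L x = lim (M x)" for x
  have Mt: "M x n = Max (t x ` {..<n})" for x n unfolding M_def t_def Ph_def ..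
  have Mconv: "M x \<longlonglongrightarrow> L x" for x
    using conv[of x] unfolding L_def M_def by (simp add: convergent_LIMSEQ_iff)
  have tL: "t x i \<le> L x" for x i
  proof (rule LIMSEQ_le_const[OF Mconv])
    show "\<exists>N. \<forall>n\<ge>N. t x i \<le> M x n"
      by (rule exI[of _ "Suc i"]) (auto simp: Mt intro!: Max_ge)
  qed
  have L_nonneg: "0 \<le> L x" for x using tL[of x 0] t_nonneg[of x 0] by simp
  have s0: "s x 0 = h x" for x unfolding s_def by simp
  have boundC: "nrm (h x - C x) \<le> c0 * L x" for x
  proof (rule le_by_max_bound[OF _ Clim[of x]])
    show "0 \<le> c0 * L x" using c0pos L_nonneg by simp
    fix n
    have "nrm (s x n - s x 0) \<le> c0 * L x"
      by (rule tele) (use tL c0pos L_nonneg in \<open>auto intro: mult_left_mono\<close>)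
    then have "nrm (h x - s x n) \<le> c0 * L x" using nrm_commute[OF val space] s0 by metis
    then show "nrm (h x - C x) \<le> max (c0 * L x) (nrm (s x n - C x))"
      using nrm_tri[OF val space, of "h x" "C x" "s x n"] max.mono[OF \<open>nrm (h x - s x n) \<le> c0 * L x\<close> order_refl]
      by (meson order_trans)
  qed
  have c0L: "c0 * L x \<le> (1 / v (8 * of_int (k^2 * (k^2 - 1)))) * L x" for x
  proof -
    have "v (8 * of_int (k^2 * (k^2 - 1)) :: 'k) = v 8 * v kk" unfolding kk_def by (rule val_mult[OF val])
    then have "(1 / v (8 * of_int (k^2 * (k^2 - 1)) :: 'k)) = c0 / v 8" unfolding c0_def by simp
    moreover have "c0 \<le> c0 / v 8" using c0pos v8pos v8le by (simp add: field_simps)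
    moreover have "c0 * L x \<le> (c0 / v 8) * L x" by (rule mult_right_mono[OF \<open>c0 \<le> c0 / v 8\<close> L_nonneg])
    ultimately show ?thesis by metis
  qed
  have bound: "nrm (f (nsmul 2 x) - sc 2 (f x) - C x) \<le> (1 / v (8 * of_int (k^2 * (k^2 - 1)))) *
      lim (\<lambda>n. Max ((\<lambda>i. (1 / v (8 ^ i)) * Phi v k \<phi> (nsmul (2 ^ (i - 1)) x)) ` {..<n}))" for x
    using boundC[of x] c0L[of x] unfolding L_def M_def h_def by simp
  have max0: "(\<lambda>n. max (a n) (b n)) \<longlonglongrightarrow> 0" if "a \<longlonglongrightarrow> 0" "b \<longlonglongrightarrow> (0::real)" for a b
    using tendsto_max[OF that] by simp
  have h_odd: "h (- z) = - h z" for z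
    unfolding h_def by (simp add: nsmul_minus odd)
  have s_odd: "s (- x) n = - s x n" for x n
    unfolding s_def by (simp add: nsmul_minus h_odd)
  have Codd: "C (- x) = - C x" for x
  proof -
    have "C (- x) + C x = 0"
    proof (rule zero_by_bound[OF space])
      show "(\<lambda>n. max (nrm (s (- x) n - C (- x))) (nrm (s x n - C x))) \<longlonglongrightarrow> 0"
        by (rule max0[OF Clim Clim])
      fix n
      have eq: "C (- x) + C x = - (s (- x) n - C (- x)) + - (s x n - C x)"
        using s_odd[of x n] by (simp add: algebra_simps)
      have "nrm (C (- x) + C x) = nrm (- (s (- x) n - C (- x)) + - (s x n - C x))" by (simp only: eq)
      also have "\<dots> \<le> max (nrm (- (s (- x) n - C (- x)))) (nrm (- (s x n - C x)))" by (rule nrm_max[OF space])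
      also have "\<dots> = max (nrm (s (- x) n - C (- x))) (nrm (s x n - C x))" by (simp only: nrm_minus[OF val space])
      finally show "nrm (C (- x) + C x) \<le> max (nrm (s (- x) n - C (- x))) (nrm (s x n - C x))" .
    qed
    then show ?thesis by (simp add: eq_neg_iff_add_eq_0)
  qed
  have s_hom: "s (nsmul 2 x) n = sc 8 (s x (Suc n))" for x n
  proof -
    have "nsmul (2 ^ n) (nsmul 2 x) = nsmul (2 ^ Suc n) x"
      using nsmul_mult[of "2^n" 2 x] by (simp add: mult.commute)
    then show ?thesis unfolding s_def using sc8[of n] by simp
  qed
  have Chom: "C (nsmul 2 x) = sc 8 (C x)" for x
  proof -
    have "C (nsmul 2 x) - sc 8 (C x) = 0"
    proof (rule zero_by_bound[OF space])
      have "(\<lambda>n. nrm (s x (Suc n) - C x)) \<longlonglongrightarrow> 0" using Clim[of x] by (rule LIMSEQ_Suc)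
      then have "(\<lambda>n. v 8 * nrm (s x (Suc n) - C x)) \<longlonglongrightarrow> 0" by (rule tendsto_mult_right_zero)
      then show "(\<lambda>n. max (nrm (s (nsmul 2 x) n - C (nsmul 2 x))) (v 8 * nrm (s x (Suc n) - C x))) \<longlonglongrightarrow> 0"
        by (rule max0[OF Clim])
      fix n
      have eq: "C (nsmul 2 x) - sc 8 (C x) = - (s (nsmul 2 x) n - C (nsmul 2 x)) + sc 8 (s x (Suc n) - C x)"
        using s_hom[of x n] by (simp add: algebra_simps scale_right_diff_distrib)
      have "nrm (C (nsmul 2 x) - sc 8 (C x)) = nrm (- (s (nsmul 2 x) n - C (nsmul 2 x)) + sc 8 (s x (Suc n) - C x))"
        by (simp only: eq)
      also have "\<dots> \<le> max (nrm (- (s (nsmul 2 x) n - C (nsmul 2 x)))) (nrm (sc 8 (s x (Suc n) - C x)))"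
        by (rule nrm_max[OF space])
      also have "\<dots> = max (nrm (s (nsmul 2 x) n - C (nsmul 2 x))) (v 8 * nrm (s x (Suc n) - C x))"
        by (simp only: nrm_minus[OF val space] nrm_scale[OF space])
      finally show "nrm (C (nsmul 2 x) - sc 8 (C x)) \<le> max (nrm (s (nsmul 2 x) n - C (nsmul 2 x))) (v 8 * nrm (s x (Suc n) - C x))" .
    qed
    then show ?thesis by simp
  qed
  have hfun: "h = (\<lambda>z. f (nsmul 2 z) - sc 2 (f z))" by (rule ext) (simp add: h_def)
  have Ds: "Dop sc k (\<lambda>z. s z n) x y = sc (1 / 8 ^ n) (Dop sc k f (nsmul (2 ^ Suc n) x) (nsmul (2 ^ Suc n) y)
      - sc 2 (Dop sc k f (nsmul (2 ^ n) x) (nsmul (2 ^ n) y)))" for n x y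
  proof -
    have e1: "Dop sc k (\<lambda>z. s z n) x y = sc (1 / 8 ^ n) (Dop sc k (\<lambda>z. h (nsmul (2^n) z)) x y)"
      unfolding s_def by (rule Dop_scale[OF vs])
    have e2: "Dop sc k (\<lambda>z. h (nsmul (2^n) z)) x y = Dop sc k h (nsmul (2^n) x) (nsmul (2^n) y)"
      by (rule Dop_comp)
    have e3: "Dop sc k h (nsmul (2^n) x) (nsmul (2^n) y) = Dop sc k (\<lambda>z. f (nsmul 2 z)) (nsmul (2^n) x) (nsmul (2^n) y)
        - Dop sc k (\<lambda>z. sc 2 (f z)) (nsmul (2^n) x) (nsmul (2^n) y)"
      unfolding hfun by (rule Dop_diff[OF vs])
    have e4: "Dop sc k (\<lambda>z. f (nsmul 2 z)) (nsmul (2^n) x) (nsmul (2^n) y) = Dop sc k f (nsmul (2 ^ Suc n) x) (nsmul (2 ^ Suc n) y)"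
      unfolding n2n by (rule Dop_comp)
    have e5: "Dop sc k (\<lambda>z. sc 2 (f z)) (nsmul (2^n) x) (nsmul (2^n) y) = sc 2 (Dop sc k f (nsmul (2 ^ n) x) (nsmul (2 ^ n) y))"
      by (rule Dop_scale[OF vs])
    show ?thesis unfolding e1 e2 e3 e4 e5 ..
  qed
  have Ds_null: "(\<lambda>n. nrm (Dop sc k (\<lambda>z. s z n) x y)) \<longlonglongrightarrow> 0" for x y
  proof (rule tendsto_sandwich[of "\<lambda>n. 0" _ _ "\<lambda>n. (1 / v (8 ^ n)) *
                 max (\<phi> (nsmul (2 ^ (n + 1)) x) (nsmul (2 ^ (n + 1)) y))
                     (v 2 * \<phi> (nsmul (2 ^ n) x) (nsmul (2 ^ n) y))"])
    show "\<forall>\<^sub>F n in sequentially. 0 \<le> nrm (Dop sc k (\<lambda>z. s z n) x y)" using nrm_nonneg[OF space] by simp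
    show "(\<lambda>n. 0) \<longlonglongrightarrow> (0::real)" by simp
    show "(\<lambda>n. (1 / v (8 ^ n)) * max (\<phi> (nsmul (2 ^ (n + 1)) x) (nsmul (2 ^ (n + 1)) y))
                     (v 2 * \<phi> (nsmul (2 ^ n) x) (nsmul (2 ^ n) y))) \<longlonglongrightarrow> 0" by (rule lim1)
    show "\<forall>\<^sub>F n in sequentially. nrm (Dop sc k (\<lambda>z. s z n) x y) \<le> (1 / v (8 ^ n)) *
                 max (\<phi> (nsmul (2 ^ (n + 1)) x) (nsmul (2 ^ (n + 1)) y))
                     (v 2 * \<phi> (nsmul (2 ^ n) x) (nsmul (2 ^ n) y))"
    proof (rule always_eventually, rule allI)
      fix n
      let ?A = "Dop sc k f (nsmul (2 ^ Suc n) x) (nsmul (2 ^ Suc n) y)"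
      let ?B = "Dop sc k f (nsmul (2 ^ n) x) (nsmul (2 ^ n) y)"
      have "nrm (Dop sc k (\<lambda>z. s z n) x y) = (1 / v (8 ^ n)) * nrm (?A - sc 2 ?B)"
        unfolding Ds nrm_scale[OF space] v1_8n ..
      also have "\<dots> \<le> (1 / v (8 ^ n)) * max (nrm ?A) (v 2 * nrm ?B)"
        using nrm_diff_max[OF val space, of ?A "sc 2 ?B"] v8npos[of n]
        by (intro mult_left_mono) (simp_all add: nrm_scale[OF space] less_imp_le)
      also have "\<dots> \<le> (1 / v (8 ^ n)) * max (\<phi> (nsmul (2 ^ (n + 1)) x) (nsmul (2 ^ (n + 1)) y))
                     (v 2 * \<phi> (nsmul (2 ^ n) x) (nsmul (2 ^ n) y))"
        using ineq v8npos[of n] val_nonneg[OF val, of 2]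
        by (intro mult_left_mono max.mono mult_left_mono) (simp_all add: less_imp_le)
      finally show "nrm (Dop sc k (\<lambda>z. s z n) x y) \<le> (1 / v (8 ^ n)) *
                 max (\<phi> (nsmul (2 ^ (n + 1)) x) (nsmul (2 ^ (n + 1)) y))
                     (v 2 * \<phi> (nsmul (2 ^ n) x) (nsmul (2 ^ n) y))" .
    qed
  qed
  have DC0: "Dop sc k C x y = 0" for x y
  proof (rule zero_by_bound[OF space])
    have l1: "(\<lambda>n. nrm (Dop sc k (\<lambda>z. C z - s z n) x y)) \<longlonglongrightarrow> 0"
    proof (rule Dop_null[OF val space])
      fix p show "(\<lambda>n. nrm (C p - s p n)) \<longlonglongrightarrow> 0"
        using Clim[of p] nrm_commute[OF val space] by simp
    qed
    show "(\<lambda>n. max (nrm (Dop sc k (\<lambda>z. C z - s z n) x y)) (nrm (Dop sc k (\<lambda>z. s z n) x y))) \<longlonglongrightarrow> 0"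
      by (rule max0[OF l1 Ds_null])
    fix n
    have "Dop sc k C x y = Dop sc k (\<lambda>z. C z - s z n) x y + Dop sc k (\<lambda>z. s z n) x y"
      using Dop_diff[OF vs, of k C "\<lambda>z. s z n" x y] by simp
    then show "nrm (Dop sc k C x y) \<le> max (nrm (Dop sc k (\<lambda>z. C z - s z n) x y)) (nrm (Dop sc k (\<lambda>z. s z n) x y))"
      using nrm_max[OF space] by metis
  qed
  have cubC: "cubic C"
    by (rule cubic_alg[OF vs two_ne0 kk_ne0 Codd Chom DC0])
  define c1 where "c1 = 1 / v (8 * of_int (k^2 * (k^2 - 1)) :: 'k)"
  have c1nn: "0 \<le> c1" unfolding c1_def using val_nonneg[OF val] by simp
  have cub_hom: "g (nsmul 2 z) = sc 8 (g z)" if "cubic g" for g :: "'a \<Rightarrow> 'x" and z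
  proof -
    have "g (nsmul 2 z + 0) + g (nsmul 2 z - 0) = nsmul 2 (g (z + 0)) + nsmul 2 (g (z - 0)) + nsmul 12 (g z)"
      using that unfolding cubic_def by blast
    then have "g (nsmul 2 z) + g (nsmul 2 z) = sc 16 (g z)"
      by (simp add: nsmul_scale scale_left_distrib[symmetric])
    moreover have "sc 2 (g (nsmul 2 z)) = g (nsmul 2 z) + g (nsmul 2 z)"
      using scale_left_distrib[of 1 1 "g (nsmul 2 z)"] by simp
    ultimately have "sc 2 (g (nsmul 2 z)) = sc 2 (sc 8 (g z))" by simp
    then have "g (nsmul 2 z) = sc 8 (g z) \<or> (2::'k) = 0" by (simp only: scale_cancel_left)
    then show ?thesis using two_ne0 by blast
  qed
  have cub_homn: "g (nsmul (2 ^ n) z) = sc (8 ^ n) (g z)" if "cubic g" for g :: "'a \<Rightarrow> 'x" and z n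
  proof (induction n)
    case (Suc n)
    have "g (nsmul (2 ^ Suc n) z) = sc 8 (g (nsmul (2 ^ n) z))" unfolding n2n by (rule cub_hom[OF that])
    also have "\<dots> = sc (8 ^ Suc n) (g z)" unfolding Suc by simp
    finally show ?case .
  qed simp
  have MX: "(1 / v (8 ^ n)) * M (nsmul (2 ^ n) x) m \<le> Max (t x ` {n..<m + n})" if "2 \<le> m" for x n m
  proof -
    let ?T = "Max (t x ` {n..<m + n})"
    have fin: "finite (t x ` {n..<m + n})" by simp
    have a: "t (nsmul (2 ^ n) x) i \<le> v (8 ^ n) * ?T" if "i < m" for i
    proof (cases i)
      case 0
      have "t (nsmul (2 ^ n) x) i = Ph (nsmul (2 ^ n) x)" unfolding 0 t_def by (simp add: val_one[OF val])
      also have "\<dots> = v (8 ^ n) * (v 8 * t x (Suc n))"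
      proof -
        have "v ((8::'k) ^ Suc n) = v 8 * v (8 ^ n)" using v8n[of "Suc n"] v8n[of n] by simp
        then show ?thesis unfolding t_def using v8pos v8npos[of n] by (simp add: field_simps)
      qed
      also have "\<dots> \<le> v (8 ^ n) * (1 * ?T)"
      proof (intro mult_left_mono mult_mono)
        show "t x (Suc n) \<le> ?T" using \<open>2 \<le> m\<close> by (intro Max_ge fin) auto
      qed (use v8le v8npos[of n] t_nonneg in \<open>auto intro: less_imp_le\<close>)
      finally show ?thesis by simp
    next
      case (Suc j)
      have "nsmul (2 ^ (i - 1)) (nsmul (2 ^ n) x) = nsmul (2 ^ (i + n - 1)) x"
        unfolding Suc nsmul_mult[symmetric] by (simp add: power_add)
      then have "t (nsmul (2 ^ n) x) i = v (8 ^ n) * t x (i + n)"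
        unfolding t_def using v8npos[of i] v8npos[of n] v8pos by (simp add: field_simps power_add val_mult[OF val] v8n)
      also have "\<dots> \<le> v (8 ^ n) * ?T"
        using that v8npos[of n] by (intro mult_left_mono Max_ge fin) (auto intro: less_imp_le)
      finally show ?thesis .
    qed
    have "M (nsmul (2 ^ n) x) m \<le> v (8 ^ n) * ?T"
      unfolding Mt using that a by (subst Max_le_iff) (auto simp: lessThan_empty_iff)
    then show ?thesis using v8npos[of n] by (simp add: field_simps)
  qed
  show ?thesis
  proof (intro exI[of _ C] conjI allI impI)
    show "cubic C" by (rule cubC)
    fix x show "nrm (f (nsmul 2 x) - sc 2 (f x) - C x) \<le> (1 / v (8 * of_int (k^2 * (k^2 - 1)))) *
      lim (\<lambda>n. Max ((\<lambda>i. (1 / v (8 ^ i)) * Phi v k \<phi> (nsmul (2 ^ (i - 1)) x)) ` {..<n}))" by (rule bound)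
  next
    fix C' :: "'a \<Rightarrow> 'x"
    assume H: "\<forall>x. (\<forall>i. convergent (\<lambda>n. Max ((\<lambda>j. (1 / v (8 ^ j)) * Phi v k \<phi> (nsmul (2 ^ (j - 1)) x)) ` {i..<n + i})))
           \<and> (\<lambda>i. lim (\<lambda>n. Max ((\<lambda>j. (1 / v (8 ^ j)) * Phi v k \<phi> (nsmul (2 ^ (j - 1)) x)) ` {i..<n + i}))) \<longlonglongrightarrow> 0"
    assume C': "cubic C' \<and> (\<forall>x. nrm (f (nsmul 2 x) - sc 2 (f x) - C' x)
                   \<le> (1 / v (8 * of_int (k^2 * (k^2 - 1)))) *
                     lim (\<lambda>n. Max ((\<lambda>i. (1 / v (8 ^ i)) * Phi v k \<phi> (nsmul (2 ^ (i - 1)) x)) ` {..<n})))"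
    define U where "U x i = lim (\<lambda>m. Max (t x ` {i..<m + i}))" for x i
    have Uconv: "(\<lambda>m. Max (t x ` {i..<m + i})) \<longlonglongrightarrow> U x i" for x i
      using H unfolding U_def t_def Ph_def by (simp add: convergent_LIMSEQ_iff)
    have Ulim: "U x \<longlonglongrightarrow> 0" for x using H unfolding U_def t_def Ph_def by simp
    have bC: "nrm (h z - C z) \<le> c1 * L z" for z using bound[of z] unfolding c1_def L_def M_def h_def by simp
    have bC': "nrm (h z - C' z) \<le> c1 * L z" for z using C' unfolding c1_def L_def M_def h_def by simp
    show "C' = C"
    proof (rule ext)
      fix x
      have "C x - C' x = 0"
      proof (rule zero_by_bound[OF space])
        show "(\<lambda>n. c1 * U x n) \<longlonglongrightarrow> 0" using tendsto_mult_right_zero[OF Ulim] by simp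
        fix n
        let ?X = "nsmul (2 ^ n) x"
        have eq: "C x - C' x = sc (1 / 8 ^ n) (C ?X - C' ?X)"
          unfolding cub_homn[OF cubC] cub_homn[OF conjunct1[OF C']] using eight
          by (simp add: scale_right_diff_distrib)
        have "nrm (C ?X - C' ?X) = nrm ((h ?X - C' ?X) - (h ?X - C ?X))" by simp
        also have "\<dots> \<le> max (nrm (h ?X - C' ?X)) (nrm (h ?X - C ?X))" by (rule nrm_diff_max[OF val space])
        also have "\<dots> \<le> c1 * L ?X" using bC bC' by simp
        finally have n1: "nrm (C ?X - C' ?X) \<le> c1 * L ?X" .
        have LU: "(1 / v (8 ^ n)) * L ?X \<le> U x n"
        proof (rule LIMSEQ_le[OF tendsto_mult_left[OF Mconv] Uconv])
          show "\<exists>N. \<forall>m\<ge>N. (1 / v (8 ^ n)) * M ?X m \<le> Max (t x ` {n..<m + n})"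
            using MX by blast
        qed
        have "nrm (C x - C' x) = (1 / v (8 ^ n)) * nrm (C ?X - C' ?X)"
          unfolding eq nrm_scale[OF space] v1_8n ..
        also have "\<dots> \<le> (1 / v (8 ^ n)) * (c1 * L ?X)"
          using n1 v8npos[of n] by (intro mult_left_mono) (auto intro: less_imp_le)
        also have "\<dots> = c1 * ((1 / v (8 ^ n)) * L ?X)" by simp
        also have "\<dots> \<le> c1 * U x n" by (rule mult_left_mono[OF LU c1nn])
        finally show "nrm (C x - C' x) \<le> c1 * U x n" .
      qed
      then show "C' x = C x" by simp
    qed
  qed
qed

end
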